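(* The Tuza constants satisfy $c_7 \le 0.1916$, $c_8 \le 0.1772$, and $c_k \le 0.1667$ for every integer $k$ with $9 \le k \le 17$.
   Context: A hypergraph $H=(V,E)$ consists of a finite vertex set $V$ and a finite collection $E$ of subsets of $V$ (edges). $H$ is $k$-uniform if every edge has exactly $k$ vertices. A transversal of $H$ is a set $T\subseteq V$ meeting every edge; $\tau(H)$ denotes the minimum size of a transversal. For $k\ge 1$, the Tuza constant is $c_k=\sup_{H} \tau(H)/(m+n)$, where the supremum ranges over all $k$-uniform hypergraphs $H$, with $n=|V|$ and $m=|E|$. *)

theory Defs
  imports Complex_Main
begin

definition hypergraph :: "'a set \<Rightarrow> 'a set set \<Rightarrow> bool" where
  "hypergraph V E \<longleftrightarrow> finite V \<and> E \<subseteq> Pow V"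

definition k_uniform :: "nat \<Rightarrow> 'a set \<Rightarrow> 'a set set \<Rightarrow> bool" where
  "k_uniform k V E \<longleftrightarrow> hypergraph V E \<and> (\<forall>e\<in>E. card e = k)"

definition transversal :: "'a set \<Rightarrow> 'a set set \<Rightarrow> 'a set \<Rightarrow> bool" where
  "transversal V E T \<longleftrightarrow> T \<subseteq> V \<and> (\<forall>e\<in>E. T \<inter> e \<noteq> {})"

definition tau :: "'a set \<Rightarrow> 'a set set \<Rightarrow> nat" where
  "tau V E = (LEAST t. \<exists>T. transversal V E T \<and> card T = t)"

text \<open>Tuza constant: supremum of tau/(m+n) over all k-uniform hypergraphs.
  Vertices are taken from nat, which loses no generality (every finite hypergraph
  is isomorphic to one on natural numbers).\<close>
definition tuza_const :: "nat \<Rightarrow> real" where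
  "tuza_const k = Sup {real (tau V E) / real (card E + card V) | (V :: nat set) E.
                        k_uniform k V E}"

end

theory Submission
  imports Defs
begin

definition deg :: "'a set set \<Rightarrow> 'a \<Rightarrow> nat" where
  "deg E v = card {e\<in>E. v \<in> e}"

fun h :: "nat \<Rightarrow> real" where
  "h 0 = 0"
| "h (Suc n) = h n + 1 / real (Suc n)"

lemma h_nonneg: "0 \<le> h n"
  by (induction n) auto

lemma h_diff:
  assumes "b \<le> a" "a \<le> D" "D > 0"
  shows "(real a - real b) / real D \<le> h a - h b"
  using assms
proof (induction a)
  case 0
  then show ?case by simp
next
  case (Suc a)
  show ?case
  proof (cases "b = Suc a")
    case True
    then show ?thesis by simp
  next
    case False
    then have ba: "b \<le> a" using Suc.prems by simp
    have IH: "(real a - real b) / real D \<le> h a - h b" using Suc ba by simp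
    have "1 / real D \<le> 1 / real (Suc a)"
      using Suc.prems by (intro divide_left_mono) auto
    have "(real (Suc a) - real b) / real D = (real a - real b) / real D + 1 / real D"
      by (simp add: diff_divide_distrib add_divide_distrib)
    also have "\<dots> \<le> h a - h b + 1 / real (Suc a)"
      using IH \<open>1 / real D \<le> 1 / real (Suc a)\<close> by linarith
    finally show ?thesis by simp
  qed
qed

lemma double_count:
  assumes "finite V" "finite F" "\<forall>e\<in>F. e \<subseteq> V"
  shows "(\<Sum>u\<in>V. card {e\<in>F. u \<in> e}) = (\<Sum>e\<in>F. card e)"
proof -
  have "(\<Sum>u\<in>V. card {e\<in>F. u \<in> e}) = (\<Sum>u\<in>V. \<Sum>e\<in>F. if u \<in> e then 1 else 0)"
    using assms by (simp add: sum.inter_filter[symmetric])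
  also have "\<dots> = (\<Sum>e\<in>F. \<Sum>u\<in>V. if u \<in> e then 1 else 0)"
    by (rule sum.swap)
  also have "\<dots> = (\<Sum>e\<in>F. card {u\<in>V. u \<in> e})"
    using assms by (simp add: sum.inter_filter[symmetric])
  also have "\<dots> = (\<Sum>e\<in>F. card e)"
  proof (intro sum.cong refl)
    fix e assume "e \<in> F"
    then have "{u\<in>V. u \<in> e} = e" using assms by auto
    then show "card {u\<in>V. u \<in> e} = card e" by simp
  qed
  finally show ?thesis .
qed

lemma greedy:
  assumes "finite V" "E \<subseteq> Pow V" "\<forall>e\<in>E. card e = k" "k > 0"
  shows "\<exists>T. transversal V E T \<and> real (card T) * real k \<le> (\<Sum>v\<in>V. h (deg E v))"
  using assms
proof (induction "card E" arbitrary: E rule: less_induct)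
  case less
  have finE: "finite E" using less.prems(1) by (intro finite_subset[OF less.prems(2)]) simp
  show ?case
  proof (cases "E = {}")
    case True
    have "transversal V E {}" using True by (simp add: transversal_def)
    then show ?thesis using h_nonneg by (intro exI[of _ "{}"]) (simp add: sum_nonneg)
  next
    case False
    then obtain e0 where e0: "e0 \<in> E" by blast
    then have "card e0 = k" using less.prems by auto
    then have "e0 \<noteq> {}" using less.prems by auto
    then obtain u0 where u0: "u0 \<in> e0" by blast
    have u0V: "u0 \<in> V" using u0 e0 less.prems by auto
    have "\<exists>v\<in>V. \<forall>u\<in>V. deg E u \<le> deg E v"
      using less.prems(1) u0V
    proof -
      have "finite (deg E ` V)" "deg E ` V \<noteq> {}" using less.prems(1) u0V by auto
      then have "Max (deg E ` V) \<in> deg E ` V" by (rule Max_in)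
      then obtain v where "v \<in> V" "deg E v = Max (deg E ` V)" by auto
      moreover have "\<forall>u\<in>V. deg E u \<le> Max (deg E ` V)"
        using \<open>finite (deg E ` V)\<close> by simp
      ultimately show ?thesis by metis
    qed
    then obtain v where vV: "v \<in> V" and vmax: "\<forall>u\<in>V. deg E u \<le> deg E v" by blast
    define Ev where "Ev = {e\<in>E. v \<in> e}"
    define E' where "E' = E - Ev"
    define D where "D = deg E v"
    have D_eq: "D = card Ev" unfolding D_def Ev_def deg_def by simp
    have finEv: "finite Ev" using finE Ev_def by simp
    have "e0 \<in> {e\<in>E. u0 \<in> e}" using e0 u0 by simp
    moreover have "finite {e\<in>E. u0 \<in> e}" using finE by simp
    ultimately have "deg E u0 \<ge> 1"
      unfolding deg_def by (metis One_nat_def Suc_leI card_gt_0_iff empty_iff)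
    then have Dpos: "D > 0" using vmax u0V D_def by fastforce
    then have "Ev \<noteq> {}" using D_eq by auto
    then have "E' \<subset> E" unfolding E'_def Ev_def by blast
    then have "card E' < card E" using finE by (rule psubset_card_mono[rotated])
    moreover have "E' \<subseteq> Pow V" "\<forall>e\<in>E'. card e = k" using less.prems E'_def by auto
    ultimately obtain T' where T': "transversal V E' T'"
      and T'b: "real (card T') * real k \<le> (\<Sum>v\<in>V. h (deg E' v))"
      using less by blast
    define T where "T = insert v T'"
    have finT': "finite T'" using T' less.prems(1) unfolding transversal_def using finite_subset by blast
    have trT: "transversal V E T"
      using T' vV unfolding T_def transversal_def E'_def Ev_def by auto
    have cardT: "card T \<le> card T' + 1" unfolding T_def using finT' by (simp add: card_insert_if)
    have split: "deg E u = deg E' u + card {e\<in>Ev. u \<in> e}" for u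
    proof -
      have "{e\<in>E. u \<in> e} = {e\<in>E'. u \<in> e} \<union> {e\<in>Ev. u \<in> e}"
        unfolding E'_def Ev_def by auto
      moreover have "{e\<in>E'. u \<in> e} \<inter> {e\<in>Ev. u \<in> e} = {}" unfolding E'_def by auto
      moreover have "finite {e\<in>E'. u \<in> e}" "finite {e\<in>Ev. u \<in> e}"
        using finE E'_def finEv by auto
      ultimately show ?thesis unfolding deg_def by (simp add: card_Un_disjoint)
    qed
    have dc: "(\<Sum>u\<in>V. card {e\<in>Ev. u \<in> e}) = (\<Sum>e\<in>Ev. card e)"
      using double_count[of V Ev] less.prems finEv Ev_def by auto
    also have "\<dots> = D * k" using D_eq less.prems Ev_def by simp
    finally have dc2: "(\<Sum>u\<in>V. real (card {e\<in>Ev. u \<in> e})) = real D * real k"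
      by (metis of_nat_mult of_nat_sum)
    have "real k = (\<Sum>u\<in>V. real (card {e\<in>Ev. u \<in> e})) / real D"
      using dc2 Dpos by simp
    also have "\<dots> = (\<Sum>u\<in>V. (real (deg E u) - real (deg E' u)) / real D)"
      by (simp add: sum_divide_distrib split)
    also have "\<dots> \<le> (\<Sum>u\<in>V. h (deg E u) - h (deg E' u))"
    proof (rule sum_mono)
      fix u assume "u \<in> V"
      then show "(real (deg E u) - real (deg E' u)) / real D \<le> h (deg E u) - h (deg E' u)"
        using h_diff[of "deg E' u" "deg E u" D] split[of u] vmax D_def Dpos by auto
    qed
    finally have kb: "real k \<le> (\<Sum>u\<in>V. h (deg E u)) - (\<Sum>u\<in>V. h (deg E' u))"
      by (simp add: sum_subtractf)
    have "real (card T) * real k \<le> (real (card T') + 1) * real k"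
      using cardT by (intro mult_right_mono) auto
    also have "\<dots> \<le> (\<Sum>u\<in>V. h (deg E u))" using T'b kb by (simp add: algebra_simps)
    finally show ?thesis using trT by blast
  qed
qed

lemma tuza_le:
  assumes k: "k > 0" and c: "c \<ge> 0" and hb: "\<forall>d. h d \<le> c * (real k + real d)"
  shows "tuza_const k \<le> c"
  unfolding tuza_const_def
proof (rule cSup_least)
  have "k_uniform k ({}::nat set) {}" by (simp add: k_uniform_def hypergraph_def)
  then show "{real (tau V E) / real (card E + card V) | (V :: nat set) E. k_uniform k V E} \<noteq> {}"
    by blast
next
  fix x assume "x \<in> {real (tau V E) / real (card E + card V) | (V :: nat set) E. k_uniform k V E}"
  then obtain V :: "nat set" and E where x: "x = real (tau V E) / real (card E + card V)"
    and ku: "k_uniform k V E" by blast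
  have fV: "finite V" and EP: "E \<subseteq> Pow V" and ce: "\<forall>e\<in>E. card e = k"
    using ku unfolding k_uniform_def hypergraph_def by auto
  have finE: "finite E" using fV by (intro finite_subset[OF EP]) simp
  obtain T where trT: "transversal V E T" and Tb: "real (card T) * real k \<le> (\<Sum>v\<in>V. h (deg E v))"
    using greedy[OF fV EP ce k] by blast
  have "tau V E \<le> card T" unfolding tau_def using trT by (intro Least_le) blast
  have dc: "(\<Sum>v\<in>V. deg E v) = card E * k"
    unfolding deg_def using double_count[of V E] fV finE EP ce by auto
  have "(\<Sum>v\<in>V. h (deg E v)) \<le> (\<Sum>v\<in>V. c * (real k + real (deg E v)))"
    using hb by (intro sum_mono) auto
  also have "\<dots> = c * (real k * real (card V) + real (\<Sum>v\<in>V. deg E v))"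
    by (simp add: sum.distrib sum_distrib_left algebra_simps)
  also have "\<dots> = c * real k * (real (card E + card V))"
    using dc by (simp add: algebra_simps)
  finally have "real (card T) * real k \<le> c * real (card E + card V) * real k"
    using Tb by (simp add: algebra_simps)
  then have "real (card T) \<le> c * real (card E + card V)" using k by simp
  then have tb: "real (tau V E) \<le> c * real (card E + card V)"
    using \<open>tau V E \<le> card T\<close> by (meson le_trans of_nat_le_iff order.trans)
  show "x \<le> c"
  proof (cases "card E + card V = 0")
    case True then show ?thesis using x c by simp
  next
    case False then show ?thesis using x tb c by (simp add: divide_le_eq)
  qed
qed

lemma h_bound:
  assumes "1/6 \<le> c" "\<forall>d\<le>5. h d \<le> c * (real k + real d)"
  shows "h d \<le> c * (real k + real d)"
proof (induction d)
  case 0 then show ?case using assms by auto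
next
  case (Suc d)
  show ?case
  proof (cases "Suc d \<le> 5")
    case True then show ?thesis using assms by blast
  next
    case False
    then have "1 / real (Suc d) \<le> 1/6" by (simp add: divide_simps)
    then have "1 / real (Suc d) \<le> c" using assms(1) by linarith
    then show ?thesis using Suc by (simp add: algebra_simps)
  qed
qed

lemma h_vals: "h 1 = 1" "h 2 = 3/2" "h 3 = 11/6" "h 4 = 25/12" "h 5 = 137/60"
  by (simp_all add: eval_nat_numeral)

lemma le5: "(d::nat) \<le> 5 \<Longrightarrow> d = 0 \<or> d = 1 \<or> d = 2 \<or> d = 3 \<or> d = 4 \<or> d = 5"
  by auto

theorem theorem1:
  shows "tuza_const 7 \<le> 0.1916 \<and> tuza_const 8 \<le> 0.1772 \<and>
         (\<forall>k::nat. 9 \<le> k \<and> k \<le> 17 \<longrightarrow> tuza_const k \<le> 0.1667)"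
proof (intro conjI allI impI)
  have h7: "\<forall>d\<le>5. h d \<le> 0.1916 * (real 7 + real d)"
  proof (intro allI impI)
    fix d :: nat assume "d \<le> 5"
    then show "h d \<le> 0.1916 * (real 7 + real d)"
      using le5[OF \<open>d \<le> 5\<close>] by (elim disjE; simp add: h_vals)
  qed
  show "tuza_const 7 \<le> 0.1916"
    using h_bound[of "0.1916" 7, OF _ h7] by (intro tuza_le) auto
next
  have h8: "\<forall>d\<le>5. h d \<le> 0.1772 * (real 8 + real d)"
  proof (intro allI impI)
    fix d :: nat assume "d \<le> 5"
    then show "h d \<le> 0.1772 * (real 8 + real d)"
      using le5[OF \<open>d \<le> 5\<close>] by (elim disjE; simp add: h_vals)
  qed
  show "tuza_const 8 \<le> 0.1772"
    using h_bound[of "0.1772" 8, OF _ h8] by (intro tuza_le) auto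
next
  fix k :: nat assume k: "9 \<le> k \<and> k \<le> 17"
  have "\<forall>d\<le>5. h d \<le> 0.1667 * (real 9 + real d)"
  proof (intro allI impI)
    fix d :: nat assume "d \<le> 5"
    then show "h d \<le> 0.1667 * (real 9 + real d)"
      using le5[OF \<open>d \<le> 5\<close>] by (elim disjE; simp add: h_vals)
  qed
  moreover have "0.1667 * (real 9 + real d) \<le> 0.1667 * (real k + real d)" for d
    using k by simp
  ultimately have h9: "\<forall>d\<le>5. h d \<le> 0.1667 * (real k + real d)" by (meson order.trans)
  show "tuza_const k \<le> 0.1667"
    using k h_bound[of "0.1667" k, OF _ h9] by (intro tuza_le) auto
qed

end
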